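(* Suppose there is a quantum algorithm $A_0$ making $q$ queries to $U$ and $U^\dagger$ which, for $U$ Haar-random on $\mathbb{C}^d$, has (expected over $U$) advantage $\varepsilon$ in breaking honest binding of the EPR commitment scheme, i.e. acting only on $\mathsf A\otimes\mathsf D$ on $\ket0_{\mathsf A}\ket{\psi^U_0}$ it produces $\rho_0$ with $\mathbb{E}_U\mathrm{tr}(\ket{\psi^U_1}\bra{\psi^U_1}\rho_0)\ge\varepsilon$. Then for every distribution $D$ over unitaries on $\mathbb{C}^d$ there is a quantum algorithm $A_1$ making $q$ queries to $V,V^\dagger$ which, for $V\sim D$, achieves the same advantage $\varepsilon$ against the scheme instantiated with $V$.
   Context: Registers $\mathsf D,\mathsf C$ are both $\mathbb{C}^d$, $\ket{\mathrm{EPR}}=d^{-1/2}\sum_x\ket x_{\mathsf D}\ket x_{\mathsf C}$. For a unitary $U$, the commitment states are $\ket{\psi^U_0}=\ket{\mathrm{EPR}}$ and $\ket{\psi^U_1}=(I_{\mathsf D}\otimes U)\ket{\mathrm{EPR}}$; the adversary has a private register $\mathsf A$ and may act only on $\mathsf A\otimes\mathsf D$, and $\rho_0$ denotes the resulting state on $\mathsf{DC}$ after tracing out $\mathsf A$. The lemma counts only queries to the oracle (no bound on other computation). *)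

theory Defs
  imports "HOL-Probability.Probability"
begin

text \<open>Dimension d = CARD('n).
  The adversary register A has basis {..<m} (m an explicit natural number, so that
  different algorithms may use different ancilla sizes); D and C have basis 'n.
  Pure states of A D C are functions nat x 'n x 'n => complex (entries with a >= m ignored).\<close>

definition adj :: "complex^'n^'n \<Rightarrow> complex^'n^'n" where
  "adj U = (\<chi> i j. cnj (U $ j $ i))"

definition unitary_mat :: "complex^'n::finite^'n \<Rightarrow> bool" where
  "unitary_mat U \<longleftrightarrow> U ** adj U = mat 1 \<and> adj U ** U = mat 1"

definition haar :: "(complex^'n::finite^'n) measure \<Rightarrow> bool" where
  "haar H \<longleftrightarrow> prob_space H \<and> sets H = sets borel \<and> (AE U in H. unitary_mat U) \<and>
     (\<forall>W. unitary_mat W \<longrightarrow> distr H borel (\<lambda>U. W ** U) = H \<and> distr H borel (\<lambda>U. U ** W) = H)"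

type_synonym 'n adop = "nat \<times> 'n \<Rightarrow> nat \<times> 'n \<Rightarrow> complex"
type_synonym 'n st = "nat \<times> 'n \<times> 'n \<Rightarrow> complex"

definition unitary_AD :: "nat \<Rightarrow> ('n::finite) adop \<Rightarrow> bool" where
  "unitary_AD m G \<longleftrightarrow>
     (\<forall>i\<in>{..<m} \<times> (UNIV::'n set). \<forall>j\<in>{..<m} \<times> (UNIV::'n set).
        (\<Sum>k\<in>{..<m} \<times> (UNIV::'n set). G i k * cnj (G j k)) = (if i = j then 1 else 0) \<and>
        (\<Sum>k\<in>{..<m} \<times> (UNIV::'n set). cnj (G k i) * G k j) = (if i = j then 1 else 0))"

definition apply_AD :: "nat \<Rightarrow> ('n::finite) adop \<Rightarrow> 'n st \<Rightarrow> 'n st" where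
  "apply_AD m G \<phi> = (\<lambda>(a, x, c). \<Sum>(b, y)\<in>{..<m} \<times> (UNIV::'n set). G (a, x) (b, y) * \<phi> (b, y, c))"

text \<open>One oracle query: I_A (x) U (x) I_C (if flag False) or I_A (x) U^dagger (x) I_C (if True),
  acting on the query register D.\<close>
definition query :: "complex^'n::finite^'n \<Rightarrow> bool \<Rightarrow> 'n st \<Rightarrow> 'n st" where
  "query U dag \<phi> = (\<lambda>(a, x, c). \<Sum>y\<in>UNIV. (if dag then adj U else U) $ x $ y * \<phi> (a, y, c))"

definition epr :: "'n::finite \<times> 'n \<Rightarrow> complex" where
  "epr = (\<lambda>(x, c). if x = c then complex_of_real (1 / sqrt (real CARD('n))) else 0)"

text \<open>|psi_1^U> = (I_D (x) U)|EPR>.\<close>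
definition psi1 :: "complex^'n::finite^'n \<Rightarrow> 'n \<times> 'n \<Rightarrow> complex" where
  "psi1 U = (\<lambda>(x, c). \<Sum>y\<in>UNIV. U $ c $ y * epr (x, y))"

definition init_st :: "('n::finite) st" where
  "init_st = (\<lambda>(a, x, c). if a = 0 then epr (x, c) else 0)"

text \<open>A q-query algorithm: ancilla dimension m, unitaries G 0, ..., G q on A (x) D,
  and flags b 1, ..., b q saying whether query k is to U or to U^dagger.
  It runs G 0, then (query k; G k) for k = 1..q.\<close>
type_synonym 'n alg = "nat \<times> (nat \<Rightarrow> 'n adop) \<times> (nat \<Rightarrow> bool)"

definition valid_alg :: "nat \<Rightarrow> ('n::finite) alg \<Rightarrow> bool" where
  "valid_alg q A = (case A of (m, G, b) \<Rightarrow> 1 \<le> m \<and> (\<forall>k\<le>q. unitary_AD m (G k)))"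

fun run :: "('n::finite) alg \<Rightarrow> complex^'n^'n \<Rightarrow> nat \<Rightarrow> 'n st" where
  "run (m, G, b) U 0 = apply_AD m (G 0) init_st"
| "run (m, G, b) U (Suc k) = apply_AD m (G (Suc k)) (query U (b (Suc k)) (run (m, G, b) U k))"

text \<open>rho_0 = tr_A |phi><phi| for the final state phi after q queries.\<close>
definition rho0 :: "nat \<Rightarrow> ('n::finite) alg \<Rightarrow> complex^'n^'n \<Rightarrow> ('n \<times> 'n) \<Rightarrow> ('n \<times> 'n) \<Rightarrow> complex" where
  "rho0 q A U = (\<lambda>(x, c) (x', c'). \<Sum>a<fst A. run A U q (a, x, c) * cnj (run A U q (a, x', c')))"

text \<open>Advantage tr(|psi_1^U><psi_1^U| rho_0) = <psi_1^U| rho_0 |psi_1^U>.\<close>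
definition adv :: "nat \<Rightarrow> ('n::finite) alg \<Rightarrow> complex^'n^'n \<Rightarrow> real" where
  "adv q A U = Re (\<Sum>i\<in>UNIV. \<Sum>j\<in>UNIV. cnj (psi1 U i) * rho0 q A U i j * psi1 U j)"

end

theory Submission
  imports Defs
begin
lemma cnj_meas[measurable]: "(\<lambda>x. cnj (f x :: complex)) \<in> borel_measurable M" if "f \<in> borel_measurable M"
proof -
  have "(cnj :: complex \<Rightarrow> complex) \<in> borel_measurable borel"
    by (intro borel_measurable_continuous_onI continuous_intros)
  then show ?thesis by (rule measurable_compose[OF that])
qed

definition opD :: "complex^'n^'n \<Rightarrow> ('n::finite) st \<Rightarrow> 'n st" where
  "opD M \<phi> = (\<lambda>(a, x, c). \<Sum>y\<in>UNIV. M $ x $ y * \<phi> (a, y, c))"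
definition SS :: "nat \<Rightarrow> (nat \<times> 'n::finite) set" where "SS m = {..<m} \<times> UNIV"
definition prodS :: "nat \<Rightarrow> ('n::finite) adop \<Rightarrow> 'n adop \<Rightarrow> 'n adop" where
  "prodS m A B = (\<lambda>i k. \<Sum>j\<in>SS m. A i j * B j k)"
definition liftD :: "complex^'n^'n \<Rightarrow> ('n::finite) adop" where
  "liftD M = (\<lambda>(a, x) (b, y). if a = b then M $ x $ y else 0)"
definition eqA :: "nat \<Rightarrow> ('n::finite) st \<Rightarrow> 'n st \<Rightarrow> bool" where
  "eqA m \<phi> \<psi> \<longleftrightarrow> (\<forall>a<m. \<forall>x c. \<phi> (a, x, c) = \<psi> (a, x, c))"

lemma delta_l: "(\<Sum>y\<in>S. (if x = y then 1 else 0) * (f y::complex)) = (if x \<in> S then f x else 0)" if "finite S"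
proof -
  have "(\<Sum>y\<in>S. (if x = y then 1 else 0) * f y) = (\<Sum>y\<in>S. if x = y then f y else 0)" by (rule sum.cong) auto
  then show ?thesis using that by simp
qed
lemma delta_r: "(\<Sum>y\<in>S. g y * (if x = y then 1 else 0)) = (if x \<in> S then g x else (0::complex))" if "finite S"
proof -
  have "(\<Sum>y\<in>S. g y * (if x = y then 1 else 0)) = (\<Sum>y\<in>S. if x = y then g y else 0)" by (rule sum.cong) auto
  then show ?thesis using that by simp
qed

lemma sum_SS: "(\<Sum>j\<in>SS m. f j) = (\<Sum>b<m. \<Sum>y\<in>(UNIV::'n::finite set). f (b,y))"
  unfolding SS_def sum.cartesian_product by simp

lemma finite_SS[simp]: "finite (SS m)" by (simp add: SS_def)

lemma apply_AD_eq: "apply_AD m G \<phi> (a, x, c) = (\<Sum>j\<in>SS m. G (a, x) j * \<phi> (fst j, snd j, c))"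
  unfolding apply_AD_def SS_def by (simp add: case_prod_unfold)

lemma opD_eq: "opD M \<phi> (a, x, c) = (\<Sum>y\<in>UNIV. M $ x $ y * \<phi> (a, y, c))"
  unfolding opD_def by simp

lemma query_opD: "query U dag = opD (if dag then adj U else U)"
  unfolding query_def opD_def by (auto intro!: ext)

lemma L1: "eqA m \<phi> \<psi> \<Longrightarrow> apply_AD m G \<phi> = apply_AD m G \<psi>"
  unfolding eqA_def
  apply (intro ext)
  apply (clarsimp simp: apply_AD_eq)
  apply (intro sum.cong refl)
  apply (auto simp: SS_def)
  done

lemma L2: "eqA m \<phi> \<psi> \<Longrightarrow> eqA m (opD M \<phi>) (opD M \<psi>)"
  unfolding eqA_def by (simp add: opD_eq)

lemma L3: "eqA m (apply_AD m (liftD M) \<phi>) (opD M \<phi>)"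
proof -
  { fix a x c assume a: "a < m"
    have "apply_AD m (liftD M) \<phi> (a, x, c) = (\<Sum>b<m. \<Sum>y\<in>UNIV. (if a = b then M $ x $ y else 0) * \<phi> (b, y, c))"
      unfolding apply_AD_eq sum_SS liftD_def by simp
    also have "\<dots> = (\<Sum>y\<in>UNIV. \<Sum>b<m. (if a = b then 1 else 0) * (M $ x $ y * \<phi> (b, y, c)))"
      by (subst sum.swap) (auto intro!: sum.cong)
    also have "\<dots> = (\<Sum>y\<in>UNIV. M $ x $ y * \<phi> (a, y, c))"
      using a by (simp add: delta_l)
    finally have "apply_AD m (liftD M) \<phi> (a, x, c) = opD M \<phi> (a, x, c)" by (simp add: opD_eq) }
  then show ?thesis unfolding eqA_def by blast
qed

lemma eqA_trans: "eqA m a b \<Longrightarrow> eqA m b c \<Longrightarrow> eqA m a c" unfolding eqA_def by simp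
lemma eqA_refl: "eqA m a a" unfolding eqA_def by simp

lemma L4: "apply_AD m (prodS m A B) \<phi> = apply_AD m A (apply_AD m B \<phi>)"
  apply (intro ext)
  apply (clarsimp simp: apply_AD_eq prodS_def sum_distrib_left sum_distrib_right)
  apply (subst sum.swap)
  apply (simp add: mult.assoc)
  done

lemma L5: "opD M (opD N \<phi>) = opD (M ** N) \<phi>"
  apply (intro ext)
  apply (clarsimp simp: opD_eq matrix_matrix_mult_def sum_distrib_left sum_distrib_right)
  apply (subst sum.swap)
  apply (simp add: mult.assoc)
  done

lemma opD_one: "opD (mat 1) \<phi> = \<phi>"
  by (intro ext) (clarsimp simp: opD_eq mat_def delta_l)

lemma adj_mult: "adj (A ** B) = adj B ** adj (A :: complex^'n::finite^'n)"
  unfolding adj_def matrix_matrix_mult_def by (simp add: vec_eq_iff cnj_sum mult.commute)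


lemma swap3: "(\<Sum>k\<in>S. \<Sum>j\<in>T. \<Sum>j'\<in>R. f k j j') = (\<Sum>j\<in>T. \<Sum>j'\<in>R. \<Sum>k\<in>S. (f k j j' :: complex))"
proof -
  have "(\<Sum>k\<in>S. \<Sum>j\<in>T. \<Sum>j'\<in>R. f k j j') = (\<Sum>j\<in>T. \<Sum>k\<in>S. \<Sum>j'\<in>R. f k j j')" by (rule sum.swap)
  also have "\<dots> = (\<Sum>j\<in>T. \<Sum>j'\<in>R. \<Sum>k\<in>S. f k j j')" by (rule sum.cong[OF refl], rule sum.swap)
  finally show ?thesis .
qed

lemma unitary_prod:
  assumes A: "unitary_AD m A" and B: "unitary_AD m B"
  shows "unitary_AD m (prodS m A B)"
proof -
  let ?S = "SS m :: (nat \<times> 'a) set"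
  have uA: "\<And>i j. i \<in> ?S \<Longrightarrow> j \<in> ?S \<Longrightarrow> (\<Sum>k\<in>?S. A i k * cnj (A j k)) = (if i = j then 1 else 0) \<and>
        (\<Sum>k\<in>?S. cnj (A k i) * A k j) = (if i = j then 1 else 0)"
    using A unfolding unitary_AD_def SS_def by blast
  have uB: "\<And>i j. i \<in> ?S \<Longrightarrow> j \<in> ?S \<Longrightarrow> (\<Sum>k\<in>?S. B i k * cnj (B j k)) = (if i = j then 1 else 0) \<and>
        (\<Sum>k\<in>?S. cnj (B k i) * B k j) = (if i = j then 1 else 0)"
    using B unfolding unitary_AD_def SS_def by blast
  have row: "(\<Sum>k\<in>?S. prodS m A B i k * cnj (prodS m A B i' k)) = (if i = i' then 1 else 0)"
    if i: "i \<in> ?S" and i': "i' \<in> ?S" for i i'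
  proof -
    have "(\<Sum>k\<in>?S. prodS m A B i k * cnj (prodS m A B i' k))
        = (\<Sum>k\<in>?S. \<Sum>j\<in>?S. \<Sum>j'\<in>?S. (A i j * cnj (A i' j')) * (B j k * cnj (B j' k)))"
      unfolding prodS_def cnj_sum complex_cnj_mult sum_product by (intro sum.cong refl) (simp only: mult_ac)
    also have "\<dots> = (\<Sum>j\<in>?S. \<Sum>j'\<in>?S. (A i j * cnj (A i' j')) * (\<Sum>k\<in>?S. B j k * cnj (B j' k)))"
      by (subst swap3) (simp only: sum_distrib_left)
    also have "\<dots> = (\<Sum>j\<in>?S. \<Sum>j'\<in>?S. (A i j * cnj (A i' j')) * (if j = j' then 1 else 0))"
      using uB by (intro sum.cong refl) simp
    also have "\<dots> = (\<Sum>j\<in>?S. A i j * cnj (A i' j))"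
      by (intro sum.cong refl) (simp add: delta_r)
    also have "\<dots> = (if i = i' then 1 else 0)" using uA i i' by blast
    finally show ?thesis .
  qed
  have col: "(\<Sum>k\<in>?S. cnj (prodS m A B k i) * prodS m A B k i') = (if i = i' then 1 else 0)"
    if i: "i \<in> ?S" and i': "i' \<in> ?S" for i i'
  proof -
    have "(\<Sum>k\<in>?S. cnj (prodS m A B k i) * prodS m A B k i')
        = (\<Sum>k\<in>?S. \<Sum>j\<in>?S. \<Sum>j'\<in>?S. (cnj (B j i) * B j' i') * (cnj (A k j) * A k j'))"
      unfolding prodS_def cnj_sum complex_cnj_mult sum_product by (intro sum.cong refl) (simp only: mult_ac)
    also have "\<dots> = (\<Sum>j\<in>?S. \<Sum>j'\<in>?S. (cnj (B j i) * B j' i') * (\<Sum>k\<in>?S. cnj (A k j) * A k j'))"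
      by (subst swap3) (simp only: sum_distrib_left)
    also have "\<dots> = (\<Sum>j\<in>?S. \<Sum>j'\<in>?S. (cnj (B j i) * B j' i') * (if j = j' then 1 else 0))"
      using uA by (intro sum.cong refl) simp
    also have "\<dots> = (\<Sum>j\<in>?S. cnj (B j i) * B j i')"
      by (intro sum.cong refl) (simp add: delta_r)
    also have "\<dots> = (if i = i' then 1 else 0)" using uB i i' by blast
    finally show ?thesis .
  qed
  show ?thesis unfolding unitary_AD_def using row col unfolding SS_def by blast
qed

lemma unitary_entries:
  assumes "unitary_mat M"
  shows "(\<Sum>y\<in>UNIV. M $ x $ y * cnj (M $ x' $ y)) = (if x = x' then 1 else 0)"
    and "(\<Sum>y\<in>UNIV. cnj (M $ y $ x) * M $ y $ x') = (if x = x' then 1 else 0)"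
proof -
  have "(M ** adj M) $ x $ x' = mat 1 $ x $ x'" using assms unfolding unitary_mat_def by simp
  then show "(\<Sum>y\<in>UNIV. M $ x $ y * cnj (M $ x' $ y)) = (if x = x' then 1 else 0)"
    by (simp add: matrix_matrix_mult_def adj_def mat_def)
  have "(adj M ** M) $ x $ x' = mat 1 $ x $ x'" using assms unfolding unitary_mat_def by simp
  then show "(\<Sum>y\<in>UNIV. cnj (M $ y $ x) * M $ y $ x') = (if x = x' then 1 else 0)"
    by (simp add: matrix_matrix_mult_def adj_def mat_def)
qed

lemma unitary_lift:
  assumes U: "unitary_mat M"
  shows "unitary_AD m (liftD M)"
proof -
  have row: "(\<Sum>k\<in>SS m. liftD M (a, x) k * cnj (liftD M (a', x') k)) = (if (a, x) = (a', x') then 1 else 0)"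
    if a: "a < m" for a a' x x'
  proof -
    have "(\<Sum>k\<in>SS m. liftD M (a, x) k * cnj (liftD M (a', x') k))
       = (\<Sum>b<m. if b = a then (if a = a' then (\<Sum>y\<in>UNIV. M $ x $ y * cnj (M $ x' $ y)) else 0) else 0)"
      unfolding sum_SS liftD_def by (intro sum.cong refl) auto
    also have "\<dots> = (if a = a' then (\<Sum>y\<in>UNIV. M $ x $ y * cnj (M $ x' $ y)) else 0)"
      using a by simp
    also have "\<dots> = (if (a, x) = (a', x') then 1 else 0)"
      by (simp add: unitary_entries[OF U])
    finally show ?thesis .
  qed
  have col: "(\<Sum>k\<in>SS m. cnj (liftD M k (a, x)) * liftD M k (a', x')) = (if (a, x) = (a', x') then 1 else 0)"
    if a: "a < m" for a a' x x'
  proof -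
    have "(\<Sum>k\<in>SS m. cnj (liftD M k (a, x)) * liftD M k (a', x'))
       = (\<Sum>b<m. if b = a then (if a = a' then (\<Sum>y\<in>UNIV. cnj (M $ y $ x) * M $ y $ x') else 0) else 0)"
      unfolding sum_SS liftD_def by (intro sum.cong refl) auto
    also have "\<dots> = (if a = a' then (\<Sum>y\<in>UNIV. cnj (M $ y $ x) * M $ y $ x') else 0)"
      using a by simp
    also have "\<dots> = (if (a, x) = (a', x') then 1 else 0)"
      by (simp add: unitary_entries[OF U])
    finally show ?thesis .
  qed
  show ?thesis unfolding unitary_AD_def using row col unfolding SS_def by auto
qed

definition cW :: "complex^'n^'n \<Rightarrow> complex^'n^'n" where
  "cW W = (\<chi> i j. cnj (W $ i $ j))"

lemma adj_adj: "adj (adj W) = W" unfolding adj_def by (simp add: vec_eq_iff)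
lemma adj_one: "adj (mat 1 :: complex^'n::finite^'n) = mat 1" unfolding adj_def mat_def by (simp add: vec_eq_iff)

lemma unitary_one: "unitary_mat (mat 1 :: complex^'n::finite^'n)"
  unfolding unitary_mat_def adj_one by simp
lemma unitary_adj: "unitary_mat W \<Longrightarrow> unitary_mat (adj W)"
  unfolding unitary_mat_def adj_adj by simp
lemma cW_mult: "cW (A ** B) = cW A ** cW (B :: complex^'n::finite^'n)"
  unfolding cW_def matrix_matrix_mult_def by (simp add: vec_eq_iff cnj_sum)
lemma adj_cW: "adj (cW W) = cW (adj W)"
  unfolding cW_def adj_def by (simp add: vec_eq_iff)
lemma cW_one: "cW (mat 1 :: complex^'n::finite^'n) = mat 1"
  unfolding cW_def mat_def by (simp add: vec_eq_iff)
lemma unitary_cW: "unitary_mat W \<Longrightarrow> unitary_mat (cW W)"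
  unfolding unitary_mat_def adj_cW cW_mult[symmetric] by (simp add: cW_one)

definition Pm :: "complex^'n^'n \<Rightarrow> nat \<Rightarrow> (nat \<Rightarrow> bool) \<Rightarrow> nat \<Rightarrow> complex^'n^'n" where
  "Pm W q b k = (if k < q then (if b (Suc k) then mat 1 else W) else cW W)"
definition Qm :: "complex^'n^'n \<Rightarrow> (nat \<Rightarrow> bool) \<Rightarrow> nat \<Rightarrow> complex^'n^'n" where
  "Qm W b k = (if k = 0 then mat 1 else if b k then adj W else mat 1)"
definition simG :: "nat \<Rightarrow> (nat \<Rightarrow> ('n::finite) adop) \<Rightarrow> complex^'n^'n \<Rightarrow> nat \<Rightarrow> (nat \<Rightarrow> bool) \<Rightarrow> nat \<Rightarrow> 'n adop" where
  "simG m G W q b k = prodS m (liftD (Pm W q b k)) (prodS m (G k) (liftD (Qm W b k)))"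

lemma unitary_Pm: "unitary_mat W \<Longrightarrow> unitary_mat (Pm W q b k)"
  unfolding Pm_def by (simp add: unitary_one unitary_cW)
lemma unitary_Qm: "unitary_mat W \<Longrightarrow> unitary_mat (Qm W b k)"
  unfolding Qm_def by (simp add: unitary_one unitary_adj)

lemma valid_sim:
  assumes "valid_alg q (m, G, b)" "unitary_mat W"
  shows "valid_alg q (m, simG m G W q b, b)"
proof -
  have "1 \<le> m" "\<forall>k\<le>q. unitary_AD m (G k)" using assms(1) unfolding valid_alg_def by simp_all
  then show ?thesis unfolding valid_alg_def simG_def prod.case
    by (blast intro: unitary_prod unitary_lift unitary_Pm unitary_Qm assms(2))
qed

lemma mat_step:
  assumes "k < q"
  shows "Qm W b (Suc k) ** ((if b (Suc k) then adj V else V) ** Pm W q b k) = (if b (Suc k) then adj (V ** W) else V ** W)"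
proof (cases "b (Suc k)")
  case True
  then have "Qm W b (Suc k) = adj W" "Pm W q b k = mat 1" using assms by (simp_all add: Pm_def Qm_def)
  then show ?thesis using True by (simp add: adj_mult)
next
  case False
  then have "Qm W b (Suc k) = mat 1" "Pm W q b k = W" using assms by (simp_all add: Pm_def Qm_def)
  then show ?thesis using False by simp
qed

lemma sim_run:
  assumes "k \<le> q"
  shows "eqA m (run (m, simG m G W q b, b) V k) (opD (Pm W q b k) (run (m, G, b) (V ** W) k))"
  using assms
proof (induction k)
  case 0
  have "eqA m (apply_AD m (liftD (mat 1)) init_st) init_st"
    using L3[of m "mat 1" init_st] by (simp add: opD_one)
  then have e: "apply_AD m (G 0) (apply_AD m (liftD (mat 1)) init_st) = apply_AD m (G 0) init_st"
    by (rule L1)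
  have r: "apply_AD m (simG m G W q b 0) init_st = apply_AD m (liftD (Pm W q b 0)) (apply_AD m (G 0) (apply_AD m (liftD (mat 1)) init_st))"
    by (simp add: simG_def L4 Qm_def)
  show ?case
    unfolding run.simps r e by (rule L3)
next
  case (Suc k)
  let ?t = "run (m, simG m G W q b, b) V k"
  let ?s = "run (m, G, b) (V ** W) k"
  let ?Vk = "if b (Suc k) then adj V else V"
  let ?Q = "Qm W b (Suc k)"
  have IH: "eqA m ?t (opD (Pm W q b k) ?s)" using Suc by simp
  have "eqA m (apply_AD m (liftD ?Q) (query V (b (Suc k)) ?t)) (opD ?Q (opD ?Vk ?t))"
    unfolding query_opD by (rule L3)
  moreover have "eqA m (opD ?Q (opD ?Vk ?t)) (opD ?Q (opD ?Vk (opD (Pm W q b k) ?s)))"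
    by (intro L2 IH)
  moreover have "opD ?Q (opD ?Vk (opD (Pm W q b k) ?s)) = query (V ** W) (b (Suc k)) ?s"
    using mat_step[of k q W b V] Suc.prems by (simp add: L5 query_opD)
  ultimately have "eqA m (apply_AD m (liftD ?Q) (query V (b (Suc k)) ?t)) (query (V ** W) (b (Suc k)) ?s)"
    using eqA_trans by simp
  then have e: "apply_AD m (G (Suc k)) (apply_AD m (liftD ?Q) (query V (b (Suc k)) ?t))
      = apply_AD m (G (Suc k)) (query (V ** W) (b (Suc k)) ?s)"
    by (rule L1)
  have r: "apply_AD m (simG m G W q b (Suc k)) (query V (b (Suc k)) ?t) = apply_AD m (liftD (Pm W q b (Suc k))) (apply_AD m (G (Suc k)) (apply_AD m (liftD ?Q) (query V (b (Suc k)) ?t)))"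
    by (simp only: simG_def L4)
  show ?case
    unfolding run.simps r e by (rule L3)
qed

lemma sum_pair: "(\<Sum>p\<in>(UNIV::('a::finite \<times> 'b::finite) set). f p) = (\<Sum>x\<in>UNIV. \<Sum>c\<in>UNIV. f (x, c))"
proof -
  have "(\<Sum>x\<in>(UNIV::'a set). \<Sum>c\<in>(UNIV::'b set). f (x, c)) = (\<Sum>p\<in>UNIV \<times> UNIV. f p)"
    by (subst sum.cartesian_product) simp
  then show ?thesis by simp
qed

lemma psi1_eq: "psi1 U (x, c) = U $ c $ x * complex_of_real (1 / sqrt (real CARD('n)))"
  for U :: "complex^'n::finite^'n"
proof -
  have "psi1 U (x, c) = (\<Sum>y\<in>UNIV. if y = x then U $ c $ y * complex_of_real (1 / sqrt (real CARD('n))) else 0)"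
    unfolding psi1_def epr_def prod.case by (intro sum.cong) auto
  then show ?thesis by simp
qed

definition ampS :: "complex^'n^'n \<Rightarrow> ('n::finite) st \<Rightarrow> nat \<Rightarrow> complex" where
  "ampS U \<phi> a = (\<Sum>p\<in>UNIV. cnj (psi1 U p) * \<phi> (a, fst p, snd p))"

lemma ampS_cong: "eqA m \<phi> \<psi> \<Longrightarrow> a < m \<Longrightarrow> ampS U \<phi> a = ampS U \<psi> a"
  unfolding ampS_def eqA_def
  apply (intro sum.cong refl)
  apply (rename_tac p, case_tac p)
  apply simp
  done

lemma ampS_sim: "ampS V (opD (cW W) \<phi>) a = ampS (V ** W) \<phi> a"
proof -
  define k where "k = complex_of_real (1 / sqrt (real CARD('a)))"
  define g where "g = (\<lambda>x c y. (cnj (V $ c $ x) * cnj (W $ x $ y)) * (cnj k * \<phi> (a, y, c)))"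
  have L: "ampS V (opD (cW W) \<phi>) a = (\<Sum>x\<in>UNIV. \<Sum>c\<in>UNIV. \<Sum>y\<in>UNIV. g x c y)"
    unfolding ampS_def sum_pair opD_eq psi1_eq cW_def k_def[symmetric]
    by (simp add: g_def sum_distrib_left mult_ac)
  have R: "ampS (V ** W) \<phi> a = (\<Sum>y\<in>UNIV. \<Sum>c\<in>UNIV. \<Sum>x\<in>UNIV. g x c y)"
    apply (simp only: ampS_def sum_pair psi1_eq k_def[symmetric] matrix_matrix_mult_def vec_lambda_beta
        cnj_sum complex_cnj_mult sum_distrib_right sum_distrib_left fst_conv snd_conv)
    apply (unfold g_def)
    apply (intro sum.cong refl)
    apply (simp only: mult_ac)
    done
  have "(\<Sum>x\<in>UNIV. \<Sum>c\<in>UNIV. \<Sum>y\<in>UNIV. g x c y) = (\<Sum>c\<in>UNIV. \<Sum>x\<in>UNIV. \<Sum>y\<in>UNIV. g x c y)"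
    by (rule sum.swap)
  also have "\<dots> = (\<Sum>c\<in>UNIV. \<Sum>y\<in>UNIV. \<Sum>x\<in>UNIV. g x c y)"
    by (rule sum.cong[OF refl], rule sum.swap)
  also have "\<dots> = (\<Sum>y\<in>UNIV. \<Sum>c\<in>UNIV. \<Sum>x\<in>UNIV. g x c y)"
    by (rule sum.swap)
  finally show ?thesis using L R by simp
qed

lemma rho0_eq: "rho0 q A U i j = (\<Sum>a<fst A. run A U q (a, fst i, snd i) * cnj (run A U q (a, fst j, snd j)))"
  by (cases i; cases j) (simp add: rho0_def)

lemma adv_amp: "adv q A U = (\<Sum>a<fst A. (cmod (ampS U (run A U q) a))^2)"
proof -
  define \<phi> where "\<phi> = run A U q"
  define m where "m = fst A"
  have "(\<Sum>i\<in>UNIV. \<Sum>j\<in>UNIV. cnj (psi1 U i) * rho0 q A U i j * psi1 U j)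
      = (\<Sum>i\<in>UNIV. \<Sum>j\<in>UNIV. \<Sum>a<m. (cnj (psi1 U i) * \<phi> (a, fst i, snd i)) * cnj (cnj (psi1 U j) * \<phi> (a, fst j, snd j)))"
    unfolding rho0_eq \<phi>_def[symmetric] m_def[symmetric]
    by (intro sum.cong refl) (simp add: sum_distrib_left sum_distrib_right mult_ac)
  also have "\<dots> = (\<Sum>a<m. \<Sum>i\<in>UNIV. \<Sum>j\<in>UNIV. (cnj (psi1 U i) * \<phi> (a, fst i, snd i)) * cnj (cnj (psi1 U j) * \<phi> (a, fst j, snd j)))"
    by (rule swap3[symmetric])
  also have "\<dots> = (\<Sum>a<m. ampS U \<phi> a * cnj (ampS U \<phi> a))"
    by (simp only: ampS_def cnj_sum sum_product)
  also have "\<dots> = (\<Sum>a<m. complex_of_real ((cmod (ampS U \<phi> a))^2))"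
    by (simp only: complex_norm_square)
  finally show ?thesis unfolding adv_def m_def \<phi>_def by simp
qed

lemma adv_nonneg: "0 \<le> adv q A U"
  unfolding adv_amp by (intro sum_nonneg) simp

lemma adv_sim:
  "adv q (m, simG m G W q b, b) V = adv q (m, G, b) (V ** W)"
proof -
  have "ampS V (run (m, simG m G W q b, b) V q) a = ampS (V ** W) (run (m, G, b) (V ** W) q) a" if "a < m" for a
  proof -
    have "ampS V (run (m, simG m G W q b, b) V q) a = ampS V (opD (Pm W q b q) (run (m, G, b) (V ** W) q)) a"
      using sim_run[of q q m G W b V] that by (intro ampS_cong) auto
    also have "\<dots> = ampS (V ** W) (run (m, G, b) (V ** W) q) a"
      by (simp add: Pm_def ampS_sim)
    finally show ?thesis .
  qed
  then show ?thesis unfolding adv_amp by simp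
qed

lemma run_meas:
  assumes [measurable]: "\<And>i j. (\<lambda>x. f x $ i $ j) \<in> borel_measurable M"
  shows "(\<lambda>x. run (m, G, b) (f x) k p) \<in> borel_measurable M"
proof (induction k arbitrary: p)
  case 0
  show ?case by simp
next
  case (Suc k)
  have [measurable]: "\<And>p. (\<lambda>x. run (m, G, b) (f x) k p) \<in> borel_measurable M" by (rule Suc.IH)
  obtain a x c where p: "p = (a, x, c)" by (cases p)
  show ?case
    unfolding p run.simps apply_AD_eq query_def
    by (cases "b (Suc k)") (simp_all add: adj_def, measurable)
qed

lemma adv_meas:
  assumes [measurable]: "\<And>i j. (\<lambda>x. f x $ i $ j) \<in> borel_measurable M"
  shows "(\<lambda>x. adv q A (f x)) \<in> borel_measurable M"
proof -
  obtain m G b where A: "A = (m, G, b)" by (cases A)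
  have [measurable]: "\<And>p. (\<lambda>x. run (m, G, b) (f x) q p) \<in> borel_measurable M"
    by (rule run_meas) simp
  show ?thesis
    unfolding adv_amp ampS_def sum_pair psi1_eq A by measurable
qed

lemma meas_cong_borel:
  assumes "sets M = sets borel" "f \<in> measurable borel N"
  shows "f \<in> measurable M N"
proof -
  have "measurable M N = measurable borel N" by (rule measurable_cong_sets) (simp_all add: assms(1))
  then show ?thesis using assms(2) by simp
qed

lemma ent_borel: "(\<lambda>V::complex^'n::finite^'n. V $ i $ j) \<in> borel_measurable borel"
  by (intro borel_measurable_continuous_onI continuous_intros)

lemma ent_M: "sets M = sets borel \<Longrightarrow> (\<lambda>V::complex^'n::finite^'n. V $ i $ j) \<in> borel_measurable M"
proof -
  assume a: "sets M = sets borel"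
  have "measurable M borel = measurable borel borel" by (rule measurable_cong_sets) (simp_all add: a)
  then show ?thesis using ent_borel by (metis)
qed

lemma ent_pair:
  assumes "sets M1 = sets borel" "sets M2 = sets borel"
  shows "(\<lambda>p. (fst p :: complex^'n::finite^'n) $ i $ j) \<in> borel_measurable (M1 \<Otimes>\<^sub>M M2)"
    and "(\<lambda>p. (snd p :: complex^'n::finite^'n) $ i $ j) \<in> borel_measurable (M1 \<Otimes>\<^sub>M M2)"
  using measurable_compose[OF measurable_fst ent_M[OF assms(1)]]
    measurable_compose[OF measurable_snd ent_M[OF assms(2)]] by auto

lemma prod_adv_meas:
  assumes "sets M1 = sets borel" "sets M2 = sets borel"
  shows "(\<lambda>p. ennreal (adv q A ((fst p :: complex^'n::finite^'n) ** snd p))) \<in> borel_measurable (M1 \<Otimes>\<^sub>M M2)"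
    and "(\<lambda>p. ennreal (adv q A ((snd p :: complex^'n::finite^'n) ** fst p))) \<in> borel_measurable (M1 \<Otimes>\<^sub>M M2)"
proof -
  note [measurable] = ent_pair[OF assms]
  have "(\<lambda>p. adv q A ((fst p :: complex^'n::finite^'n) ** snd p)) \<in> borel_measurable (M1 \<Otimes>\<^sub>M M2)"
    by (rule adv_meas) (simp add: matrix_matrix_mult_def, measurable)
  then show "(\<lambda>p. ennreal (adv q A ((fst p :: complex^'n::finite^'n) ** snd p))) \<in> borel_measurable (M1 \<Otimes>\<^sub>M M2)"
    by measurable
  have "(\<lambda>p. adv q A ((snd p :: complex^'n::finite^'n) ** fst p)) \<in> borel_measurable (M1 \<Otimes>\<^sub>M M2)"
    by (rule adv_meas) (simp add: matrix_matrix_mult_def, measurable)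
  then show "(\<lambda>p. ennreal (adv q A ((snd p :: complex^'n::finite^'n) ** fst p))) \<in> borel_measurable (M1 \<Otimes>\<^sub>M M2)"
    by measurable
qed

theorem mainTheorem17:
  fixes H D :: "(complex^'n::finite^'n) measure" and A0 :: "'n alg" and q :: nat and \<epsilon> :: real
  assumes "haar H"
    and "valid_alg q A0"
    and "(\<integral>U. adv q A0 U \<partial>H) \<ge> \<epsilon>"
    and "prob_space D" and "sets D = sets borel" and "AE V in D. unitary_mat V"
  shows "\<exists>A1 :: 'n alg. valid_alg q A1 \<and> (\<integral>V. adv q A1 V \<partial>D) \<ge> \<epsilon>"
proof (cases "\<epsilon> \<le> 0")
  case True
  have "0 \<le> (\<integral>V. adv q A0 V \<partial>D)" by (rule integral_nonneg_AE) (simp add: adv_nonneg)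
  then show ?thesis using assms(2) True by (intro exI[of _ A0]) simp
next
  case False
  then have eps: "0 < \<epsilon>" by simp
  obtain m G b where A0: "A0 = (m, G, b)" by (cases A0)
  have Hp: "prob_space H" and Hs: "sets H = sets borel" and Hu: "AE U in H. unitary_mat U"
    and inv: "\<And>W. unitary_mat W \<Longrightarrow> distr H borel (\<lambda>U. W ** U) = H"
    using assms(1) unfolding haar_def by auto
  interpret H: prob_space H by (rule Hp)
  interpret D: prob_space D by (rule assms(4))
  interpret DH: pair_sigma_finite D H by unfold_locales
  let ?g = "adv q A0"
  have gmeas: "?g \<in> borel_measurable borel"
    using adv_meas[of "\<lambda>x. x" borel q A0, OF ent_borel] by simp
  have gmeasH: "?g \<in> borel_measurable H"
    by (rule meas_cong_borel[OF Hs gmeas])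
  have int: "integrable H ?g"
  proof (rule ccontr)
    assume "\<not> integrable H ?g"
    then have "(\<integral>U. ?g U \<partial>H) = 0" by (rule not_integrable_integral_eq)
    then show False using assms(3) eps by simp
  qed
  define c where "c = (\<integral>U. ?g U \<partial>H)"
  have c_eq: "(\<integral>\<^sup>+U. ennreal (?g U) \<partial>H) = ennreal c"
    unfolding c_def by (rule nn_integral_eq_integral[OF int]) (simp add: adv_nonneg)
  have epsc: "ennreal \<epsilon> \<le> ennreal c" using assms(3) unfolding c_def by (simp add: ennreal_leI)
  have inner: "(\<integral>\<^sup>+W. ennreal (?g (V ** W)) \<partial>H) = ennreal c" if V: "unitary_mat V" for V
  proof -
    have T: "(\<lambda>U. V ** U) \<in> measurable H borel"
    proof -
      have "continuous_on UNIV (\<lambda>U::complex^'n^'n. V ** U)"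
        unfolding matrix_matrix_mult_def by (intro continuous_intros)
      then have "(\<lambda>U::complex^'n^'n. V ** U) \<in> borel_measurable borel"
        by (rule borel_measurable_continuous_onI)
      then show ?thesis by (rule meas_cong_borel[OF Hs])
    qed
    have f: "(\<lambda>U. ennreal (?g U)) \<in> borel_measurable (distr H borel (\<lambda>U. V ** U))"
    proof (rule meas_cong_borel)
      show "(\<lambda>U. ennreal (?g U)) \<in> borel_measurable borel" using gmeas by measurable
    qed simp
    have "(\<integral>\<^sup>+W. ennreal (?g (V ** W)) \<partial>H) = (\<integral>\<^sup>+U. ennreal (?g U) \<partial>distr H borel (\<lambda>U. V ** U))"
      by (rule nn_integral_distr[OF T f, symmetric])
    also have "\<dots> = (\<integral>\<^sup>+U. ennreal (?g U) \<partial>H)" using inv[OF V] by simp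
    finally show ?thesis using c_eq by simp
  qed
  define h where "h = (\<lambda>W. \<integral>\<^sup>+V. ennreal (?g (V ** W)) \<partial>D)"
  have Fm: "(\<lambda>p. ennreal (?g (fst p ** snd p))) \<in> borel_measurable (D \<Otimes>\<^sub>M H)"
    by (rule prod_adv_meas(1)[OF assms(5) Hs])
  have Fm': "(\<lambda>p. ennreal (?g (snd p ** fst p))) \<in> borel_measurable (H \<Otimes>\<^sub>M D)"
    by (rule prod_adv_meas(2)[OF Hs assms(5)])
  have hmeas: "h \<in> borel_measurable H"
    unfolding h_def using D.borel_measurable_nn_integral[of "\<lambda>W V. ennreal (?g (V ** W))" H] Fm'
    by (simp add: case_prod_beta')
  have "(\<integral>\<^sup>+W. h W \<partial>H) = (\<integral>\<^sup>+V. (\<integral>\<^sup>+W. ennreal (?g (V ** W)) \<partial>H) \<partial>D)"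
    unfolding h_def using DH.Fubini'[of "\<lambda>V W. ennreal (?g (V ** W))"] Fm
    by (simp add: case_prod_beta')
  also have "\<dots> = (\<integral>\<^sup>+V. ennreal c \<partial>D)"
    using assms(6) by (intro nn_integral_cong_AE) (auto elim!: eventually_mono simp: inner)
  also have "\<dots> = ennreal c" by (simp add: D.emeasure_space_1)
  finally have hint: "(\<integral>\<^sup>+W. h W \<partial>H) = ennreal c" .
  have hfin: "AE W in H. h W \<noteq> \<infinity>"
    using nn_integral_noteq_infinite[OF hmeas] hint by simp
  have "\<exists>W. unitary_mat W \<and> h W \<noteq> \<infinity> \<and> ennreal \<epsilon> \<le> h W"
  proof (rule ccontr)
    assume na: "\<not> ?thesis"
    have lt: "AE W in H. h W < ennreal \<epsilon>"
      using Hu hfin by eventually_elim (use na in \<open>auto simp: not_le\<close>)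
    have "(\<integral>\<^sup>+W. h W \<partial>H) < (\<integral>\<^sup>+W. ennreal \<epsilon> \<partial>H)"
    proof (rule nn_integral_less)
      show "h \<in> borel_measurable H" by (rule hmeas)
      show "(\<lambda>W. ennreal \<epsilon>) \<in> borel_measurable H" by simp
      show "(\<integral>\<^sup>+W. h W \<partial>H) \<noteq> \<infinity>" using hint by simp
      show "AE W in H. h W \<le> ennreal \<epsilon>" using lt by eventually_elim simp
      show "\<not> (AE W in H. ennreal \<epsilon> \<le> h W)"
      proof
        assume "AE W in H. ennreal \<epsilon> \<le> h W"
        with lt have "AE W in H. False" by eventually_elim simp
        then show False by (simp add: H.AE_False)
      qed
    qed
    also have "\<dots> = ennreal \<epsilon>" by (simp add: H.emeasure_space_1)
    finally show False using hint epsc by simp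
  qed
  then obtain W where W: "unitary_mat W" "h W \<noteq> \<infinity>" "ennreal \<epsilon> \<le> h W" by blast
  define A1 where "A1 = (m, simG m G W q b, b)"
  have valid: "valid_alg q A1"
    unfolding A1_def using valid_sim[of q m G b W] assms(2) W(1) A0 by simp
  have advA1: "adv q A1 V = ?g (V ** W)" for V
    unfolding A1_def A0 by (rule adv_sim)
  have meas1: "adv q A1 \<in> borel_measurable D"
    using adv_meas[of "\<lambda>x. x" D q A1, OF ent_M[OF assms(5)]] by simp
  have nn1: "(\<integral>\<^sup>+V. ennreal (adv q A1 V) \<partial>D) = h W"
    unfolding h_def advA1 ..
  have int1: "integrable D (adv q A1)"
    by (rule integrableI_nonneg[OF meas1]) (use nn1 W(2) in \<open>simp_all add: adv_nonneg less_top\<close>)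
  have "ennreal (\<integral>V. adv q A1 V \<partial>D) = h W"
    using nn_integral_eq_integral[OF int1] nn1 by (simp add: adv_nonneg)
  then have "ennreal \<epsilon> \<le> ennreal (\<integral>V. adv q A1 V \<partial>D)" using W(3) by simp
  then have "\<epsilon> \<le> (\<integral>V. adv q A1 V \<partial>D)"
    by (subst (asm) ennreal_le_iff) (simp_all add: integral_nonneg_AE adv_nonneg)
  then show ?thesis using valid by blast
qed

end
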